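(* Fix $\varepsilon\ge0$. If $(\pi_1,\dots,\pi_N,\pi_c)\in\Pi^{N+1}$ satisfies $\max_{(s,a)}|\pi_i(s,a)-\pi_c(s,a)|\le\varepsilon$ for all $i$ (i.e. is feasible for the CAL problem), then there exist $\nu_i\in\mathbb{R}^{|\mathcal{S}|}$ and $\lambda_i\in\mathbb{R}^{|\mathcal{S}||\mathcal{A}|}$, $i=1,\dots,N$, such that $(\{\mu^{\pi_i}_i\}_{i=1}^N,\pi_c,\{\lambda_i\}_{i=1}^N,\{\nu_i\}_{i=1}^N)$ is feasible for the relaxed problem (R). Consequently, the optimal value of (R) is at most the optimal value of the CAL problem, where (R) is: minimize $\sum_{i=1}^N\|\Phi^\top\mu_i-\Phi^\top\mu^{\pi^{E_i}}_i\|_1$ over $\mu_i\in\mathbb{R}^{|\mathcal{S}||\mathcal{A}|}$, $\pi_c$, $\lambda_i\in\mathbb{R}^{|\mathcal{S}||\mathcal{A}|}$, $\nu_i\in\mathbb{R}^{|\mathcal{S}|}$ subject to: $\mu_i\in\mathcal{F}_i$ for all $i$; $\pi_c\in\Pi$; $\lambda_i\ge0$ for all $i$; $\nu_i(s)=\sum_{a\in\mathcal{A}}\mu_i(s,a)$ for all $i,s$; and for all $i$, $s\in\mathcal{S}$, $a\in\mathcal{A}$: $|\mu_i(s,a)-\lambda_i(s,a)|\le\varepsilon\,\nu_i(s)$, $\lambda_i(s,a)\ge\rho(s)\pi_c(s,a)$, $\lambda_i(s,a)\ge\nu_i(s)+\frac{|\mathcal{A}|}{1-\gamma}(\pi_c(s,a)-1)$,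 $\lambda_i(s,a)\le\nu_i(s)+\rho(s)(\pi_c(s,a)-1)$, $\lambda_i(s,a)\le\frac{|\mathcal{A}|}{1-\gamma}\pi_c(s,a)$.
   Context: Let $\mathcal{S},\mathcal{A}$ be finite sets, $\gamma\in(0,1)$, $\rho$ a probability distribution on $\mathcal{S}$, and for $i=1,\dots,N$ environment $i$ is the Markov decision process $(\mathcal{S},\mathcal{A},P^i,\gamma,\rho)$. $\Pi$ is the set of stationary policies $\pi:\mathcal{S}\to\Delta(\mathcal{A})$, $\pi(s,a)$ = probability of action $a$ at state $s$. $\mu^\pi_i(s,a)=\sum_{t\ge0}\gamma^t\mathbb{P}^{\pi,i}_\rho[s_t=s,a_t=a]$ is the discounted occupation measure (trajectory law: $s_0\sim\rho$, $a_t\sim\pi(s_t,\cdot)$, $s_{t+1}\sim P^i(\cdot\mid s_t,a_t)$). Let $P^i$ also denote the $|\mathcal{S}||\mathcal{A}|\times|\mathcal{S}|$ matrix with row $(s,a)$ equal to $P^i(\cdot\mid s,a)$, and $B\in\{0,1\}^{|\mathcal{S}||\mathcal{A}|\times|\mathcal{S}|}$ with $B_{(s_j,a_k),s_l}=1$ iff $j=l$; $\mathcal{F}_i=\{\mu\in\mathbb{R}^{|\mathcal{S}||\mathcal{A}|}_{\ge0}:(B-\gamma P^i)^\top\mu=\rho\}$. Expert policies $\pi^{E_i}\in\Pi$ and a cost basis matrix $\Phi\in\mathbb{R}^{|\mathcal{S}||\mathcal{A}|\times n_c}$ with columns of sup-norm at most $1$ are given. The CAL problem with parameter $\varepsilon\ge0$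 is: minimize $\sum_{i=1}^N\|\Phi^\top\mu^{\pi_i}_i-\Phi^\top\mu^{\pi^{E_i}}_i\|_1$ over $(\pi_1,\dots,\pi_N,\pi_c)\in\Pi^{N+1}$ subject to $\max_{(s,a)}|\pi_i(s,a)-\pi_c(s,a)|\le\varepsilon$ for all $i$. *)

theory Defs
  imports Complex_Main
begin

text \<open>States are a finite type 's, actions a finite type 'a. A transition kernel is
  P s a s' = P(s' | s,a). Environments, expert policies and optimisation variables are
  indexed by i < N (0-based).\<close>

definition is_policy :: "('s::finite \<Rightarrow> 'a::finite \<Rightarrow> real) \<Rightarrow> bool" where
  "is_policy \<pi> \<longleftrightarrow> (\<forall>s a. 0 \<le> \<pi> s a) \<and> (\<forall>s. (\<Sum>a\<in>UNIV. \<pi> s a) = 1)"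

definition is_distribution :: "('s::finite \<Rightarrow> real) \<Rightarrow> bool" where
  "is_distribution \<rho> \<longleftrightarrow> (\<forall>s. 0 \<le> \<rho> s) \<and> (\<Sum>s\<in>UNIV. \<rho> s) = 1"

definition is_kernel :: "('s::finite \<Rightarrow> 'a::finite \<Rightarrow> 's \<Rightarrow> real) \<Rightarrow> bool" where
  "is_kernel P \<longleftrightarrow> (\<forall>s a s'. 0 \<le> P s a s') \<and> (\<forall>s a. (\<Sum>s'\<in>UNIV. P s a s') = 1)"

fun state_law :: "('s::finite \<Rightarrow> 'a::finite \<Rightarrow> 's \<Rightarrow> real) \<Rightarrow> ('s \<Rightarrow> real)
    \<Rightarrow> ('s \<Rightarrow> 'a \<Rightarrow> real) \<Rightarrow> nat \<Rightarrow> 's \<Rightarrow> real" where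
  "state_law P \<rho> \<pi> 0 s = \<rho> s"
| "state_law P \<rho> \<pi> (Suc t) s' =
     (\<Sum>(s,a)\<in>UNIV. state_law P \<rho> \<pi> t s * \<pi> s a * P s a s')"

definition occ :: "('s::finite \<Rightarrow> 'a::finite \<Rightarrow> 's \<Rightarrow> real) \<Rightarrow> real \<Rightarrow> ('s \<Rightarrow> real)
    \<Rightarrow> ('s \<Rightarrow> 'a \<Rightarrow> real) \<Rightarrow> 's \<times> 'a \<Rightarrow> real" where
  "occ P \<gamma> \<rho> \<pi> = (\<lambda>(s,a). (\<Sum>t. \<gamma> ^ t * (state_law P \<rho> \<pi> t s * \<pi> s a)))"

text \<open>F_i = { mu >= 0 : (B - gamma P)^T mu = rho }, written out entrywise.\<close>
definition flow_set :: "('s::finite \<Rightarrow> 'a::finite \<Rightarrow> 's \<Rightarrow> real) \<Rightarrow> real \<Rightarrow> ('s \<Rightarrow> real)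
    \<Rightarrow> ('s \<times> 'a \<Rightarrow> real) set" where
  "flow_set P \<gamma> \<rho> = {\<mu>. (\<forall>x. 0 \<le> \<mu> x) \<and>
     (\<forall>s'. (\<Sum>(s,a)\<in>UNIV. ((if s = s' then 1 else 0) - \<gamma> * P s a s') * \<mu> (s,a)) = \<rho> s')}"

text \<open>|| Phi^T mu - Phi^T mu' ||_1 with Phi having columns k < nc.\<close>
definition feat_dist :: "('s::finite \<times> 'a::finite \<Rightarrow> nat \<Rightarrow> real) \<Rightarrow> nat
    \<Rightarrow> ('s \<times> 'a \<Rightarrow> real) \<Rightarrow> ('s \<times> 'a \<Rightarrow> real) \<Rightarrow> real" where
  "feat_dist \<Phi> nc \<mu> \<mu>' =
     (\<Sum>k<nc. \<bar>(\<Sum>x\<in>UNIV. \<Phi> x k * \<mu> x) - (\<Sum>x\<in>UNIV. \<Phi> x k * \<mu>' x)\<bar>)"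

definition CAL_feasible :: "nat \<Rightarrow> real \<Rightarrow> (nat \<Rightarrow> 's::finite \<Rightarrow> 'a::finite \<Rightarrow> real)
    \<Rightarrow> ('s \<Rightarrow> 'a \<Rightarrow> real) \<Rightarrow> bool" where
  "CAL_feasible N \<epsilon> \<pi>s \<pi>c \<longleftrightarrow>
     (\<forall>i<N. is_policy (\<pi>s i)) \<and> is_policy \<pi>c \<and>
     (\<forall>i<N. \<forall>s a. \<bar>\<pi>s i s a - \<pi>c s a\<bar> \<le> \<epsilon>)"

definition CAL_obj :: "nat \<Rightarrow> (nat \<Rightarrow> 's::finite \<Rightarrow> 'a::finite \<Rightarrow> 's \<Rightarrow> real) \<Rightarrow> real
    \<Rightarrow> ('s \<Rightarrow> real) \<Rightarrow> ('s \<times> 'a \<Rightarrow> nat \<Rightarrow> real) \<Rightarrow> nat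
    \<Rightarrow> (nat \<Rightarrow> 's \<Rightarrow> 'a \<Rightarrow> real) \<Rightarrow> (nat \<Rightarrow> 's \<Rightarrow> 'a \<Rightarrow> real) \<Rightarrow> real" where
  "CAL_obj N P \<gamma> \<rho> \<Phi> nc \<pi>E \<pi>s =
     (\<Sum>i<N. feat_dist \<Phi> nc (occ (P i) \<gamma> \<rho> (\<pi>s i)) (occ (P i) \<gamma> \<rho> (\<pi>E i)))"

definition R_feasible :: "nat \<Rightarrow> (nat \<Rightarrow> 's::finite \<Rightarrow> 'a::finite \<Rightarrow> 's \<Rightarrow> real) \<Rightarrow> real
    \<Rightarrow> ('s \<Rightarrow> real) \<Rightarrow> real
    \<Rightarrow> (nat \<Rightarrow> 's \<times> 'a \<Rightarrow> real) \<Rightarrow> ('s \<Rightarrow> 'a \<Rightarrow> real)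
    \<Rightarrow> (nat \<Rightarrow> 's \<times> 'a \<Rightarrow> real) \<Rightarrow> (nat \<Rightarrow> 's \<Rightarrow> real) \<Rightarrow> bool" where
  "R_feasible N P \<gamma> \<rho> \<epsilon> \<mu> \<pi>c lam \<nu> \<longleftrightarrow>
     (\<forall>i<N. \<mu> i \<in> flow_set (P i) \<gamma> \<rho>) \<and> is_policy \<pi>c \<and>
     (\<forall>i<N. \<forall>x. 0 \<le> lam i x) \<and>
     (\<forall>i<N. \<forall>s. \<nu> i s = (\<Sum>a\<in>UNIV. \<mu> i (s,a))) \<and>
     (\<forall>i<N. \<forall>s a.
        \<bar>\<mu> i (s,a) - lam i (s,a)\<bar> \<le> \<epsilon> * \<nu> i s \<and>
        lam i (s,a) \<ge> \<rho> s * \<pi>c s a \<and>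
        lam i (s,a) \<ge> \<nu> i s + real (card (UNIV :: 'a set)) / (1 - \<gamma>) * (\<pi>c s a - 1) \<and>
        lam i (s,a) \<le> \<nu> i s + \<rho> s * (\<pi>c s a - 1) \<and>
        lam i (s,a) \<le> real (card (UNIV :: 'a set)) / (1 - \<gamma>) * \<pi>c s a)"

definition R_obj :: "nat \<Rightarrow> (nat \<Rightarrow> 's::finite \<Rightarrow> 'a::finite \<Rightarrow> 's \<Rightarrow> real) \<Rightarrow> real
    \<Rightarrow> ('s \<Rightarrow> real) \<Rightarrow> ('s \<times> 'a \<Rightarrow> nat \<Rightarrow> real) \<Rightarrow> nat
    \<Rightarrow> (nat \<Rightarrow> 's \<Rightarrow> 'a \<Rightarrow> real) \<Rightarrow> (nat \<Rightarrow> 's \<times> 'a \<Rightarrow> real) \<Rightarrow> real" where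
  "R_obj N P \<gamma> \<rho> \<Phi> nc \<pi>E \<mu> =
     (\<Sum>i<N. feat_dist \<Phi> nc (\<mu> i) (occ (P i) \<gamma> \<rho> (\<pi>E i)))"

end

theory Submission imports Defs begin

lemma sum_UNIV_pair: "(\<Sum>x\<in>(UNIV::('s::finite\<times>'a::finite) set). f x) = (\<Sum>s\<in>UNIV. \<Sum>a\<in>UNIV. f (s,a))"
  by (subst UNIV_Times_UNIV[symmetric], subst sum.cartesian_product) simp

lemma sl_nonneg:
  assumes "is_kernel P" "is_policy \<pi>" "is_distribution \<rho>"
  shows "0 \<le> state_law P \<rho> \<pi> t s"
  using assms
  by (induction t arbitrary: s) (auto simp: is_kernel_def is_policy_def is_distribution_def sum_UNIV_pair intro!: sum_nonneg mult_nonneg_nonneg)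

lemma sl_sum:
  assumes "is_kernel P" "is_policy \<pi>" "is_distribution \<rho>"
  shows "(\<Sum>s\<in>UNIV. state_law P \<rho> \<pi> t s) = 1"
proof (induction t)
  case 0 then show ?case using assms by (simp add: is_distribution_def)
next
  case (Suc t)
  have "(\<Sum>s'\<in>UNIV. state_law P \<rho> \<pi> (Suc t) s') =
      (\<Sum>s'\<in>UNIV. \<Sum>s\<in>UNIV. \<Sum>a\<in>UNIV. state_law P \<rho> \<pi> t s * \<pi> s a * P s a s')"
    by (simp add: sum_UNIV_pair)
  also have "\<dots> = (\<Sum>s\<in>UNIV. \<Sum>s'\<in>UNIV. \<Sum>a\<in>UNIV. state_law P \<rho> \<pi> t s * \<pi> s a * P s a s')"
    by (rule sum.swap)
  also have "\<dots> = (\<Sum>s\<in>UNIV. \<Sum>a\<in>UNIV. \<Sum>s'\<in>UNIV. state_law P \<rho> \<pi> t s * \<pi> s a * P s a s')"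
    by (rule sum.cong[OF refl], rule sum.swap)
  also have "\<dots> = (\<Sum>s\<in>UNIV. \<Sum>a\<in>UNIV. state_law P \<rho> \<pi> t s * \<pi> s a)"
    using assms(1) by (simp add: sum_distrib_left[symmetric] is_kernel_def)
  also have "\<dots> = (\<Sum>s\<in>UNIV. state_law P \<rho> \<pi> t s)"
    using assms(2) by (simp add: sum_distrib_left[symmetric] is_policy_def)
  finally show ?case using Suc by simp
qed

lemma sl_le1:
  assumes "is_kernel P" "is_policy \<pi>" "is_distribution \<rho>"
  shows "state_law P \<rho> \<pi> t s \<le> 1"
proof -
  have "state_law P \<rho> \<pi> t s \<le> (\<Sum>s\<in>UNIV. state_law P \<rho> \<pi> t s)"
    by (rule member_le_sum) (auto intro: sl_nonneg[OF assms])
  thus ?thesis using sl_sum[OF assms] by simp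
qed

lemma sl_summable:
  assumes "is_kernel P" "is_policy \<pi>" "is_distribution \<rho>" "0 < \<gamma>" "\<gamma> < 1"
  shows "summable (\<lambda>t. \<gamma>^t * state_law P \<rho> \<pi> t s)"
proof (rule summable_comparison_test[where g="\<lambda>t. \<gamma>^t"])
  show "summable (\<lambda>t. \<gamma>^t)" using assms by (simp add: summable_geometric)
  show "\<exists>N. \<forall>n\<ge>N. norm (\<gamma>^n * state_law P \<rho> \<pi> n s) \<le> \<gamma>^n"
    using sl_nonneg[OF assms(1-3)] sl_le1[OF assms(1-3)] assms(4)
    by (auto simp: abs_mult intro!: mult_left_le)
qed


lemma occ_eq:
  assumes "is_kernel P" "is_policy \<pi>" "is_distribution \<rho>" "0 < \<gamma>" "\<gamma> < 1"
  shows "occ P \<gamma> \<rho> \<pi> (s,a) = (\<Sum>t. \<gamma>^t * state_law P \<rho> \<pi> t s) * \<pi> s a"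
proof -
  have "occ P \<gamma> \<rho> \<pi> (s,a) = (\<Sum>t. \<gamma>^t * state_law P \<rho> \<pi> t s * \<pi> s a)"
    by (simp add: occ_def mult.assoc)
  also have "\<dots> = (\<Sum>t. \<gamma>^t * state_law P \<rho> \<pi> t s) * \<pi> s a"
    by (rule suminf_mult2[symmetric], rule sl_summable[OF assms])
  finally show ?thesis .
qed

lemma d_lower:
  assumes "is_kernel P" "is_policy \<pi>" "is_distribution \<rho>" "0 < \<gamma>" "\<gamma> < 1"
  shows "\<rho> s \<le> (\<Sum>t. \<gamma>^t * state_law P \<rho> \<pi> t s)"
proof -
  let ?f = "\<lambda>t. \<gamma>^t * state_law P \<rho> \<pi> t s"
  have sf: "summable ?f" by (rule sl_summable[OF assms])
  have "(\<Sum>n. ?f (Suc n)) = suminf ?f - ?f 0" by (rule suminf_split_head[OF sf])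
  moreover have "0 \<le> (\<Sum>n. ?f (Suc n))"
  proof (rule suminf_nonneg)
    show "summable (\<lambda>n. ?f (Suc n))" by (rule summable_Suc_iff[where f="?f", THEN iffD2, OF sf])
    show "0 \<le> ?f (Suc n)" for n using assms(4) sl_nonneg[OF assms(1-3), of "Suc n" s]
      by (intro mult_nonneg_nonneg) simp_all
  qed
  ultimately show ?thesis by simp
qed

lemma d_upper:
  assumes "is_kernel P" "is_policy \<pi>" "is_distribution \<rho>" "0 < \<gamma>" "\<gamma> < 1"
  shows "(\<Sum>t. \<gamma>^t * state_law P \<rho> \<pi> t s) \<le> 1 / (1 - \<gamma>)"
proof -
  have "(\<Sum>t. \<gamma>^t * state_law P \<rho> \<pi> t s) \<le> (\<Sum>t. \<gamma>^t)"
    using sl_le1[OF assms(1-3)] assms(4,5)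
    by (intro suminf_le sl_summable[OF assms]) (auto simp: summable_geometric intro!: mult_left_le)
  also have "\<dots> = 1 / (1 - \<gamma>)" using assms by (simp add: suminf_geometric)
  finally show ?thesis .
qed

lemma flow:
  assumes "is_kernel P" "is_policy \<pi>" "is_distribution \<rho>" "0 < \<gamma>" "\<gamma> < 1"
  shows "(\<Sum>(s,a)\<in>UNIV. ((if s = s' then 1 else 0) - \<gamma> * P s a s') * occ P \<gamma> \<rho> \<pi> (s,a)) = \<rho> s'"
proof -
  define L where "L = state_law P \<rho> \<pi>"
  define d where "d s = (\<Sum>t. \<gamma>^t * L t s)" for s
  have occ: "occ P \<gamma> \<rho> \<pi> (s,a) = d s * \<pi> s a" for s a
    unfolding d_def L_def by (rule occ_eq[OF assms])
  have sm: "summable (\<lambda>t. \<gamma>^t * L t s)" for s unfolding L_def by (rule sl_summable[OF assms])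
  have "(\<lambda>t. \<Sum>s\<in>UNIV. \<Sum>a\<in>UNIV. \<gamma>^t * L t s * (\<pi> s a * P s a s')) sums
        (\<Sum>s\<in>UNIV. \<Sum>a\<in>UNIV. d s * (\<pi> s a * P s a s'))"
    unfolding d_def
    by (intro sums_sum sums_mult2 summable_sums sm)
  moreover have "(\<Sum>s\<in>UNIV. \<Sum>a\<in>UNIV. \<gamma>^t * L t s * (\<pi> s a * P s a s')) = \<gamma>^t * L (Suc t) s'" for t
    by (simp add: L_def sum_UNIV_pair sum_distrib_left mult.assoc)
  ultimately have S: "(\<lambda>t. \<gamma>^t * L (Suc t) s') sums (\<Sum>s\<in>UNIV. \<Sum>a\<in>UNIV. d s * (\<pi> s a * P s a s'))"
    by simp
  have "(\<Sum>n. \<gamma>^(Suc n) * L (Suc n) s') = d s' - \<gamma>^0 * L 0 s'"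
    unfolding d_def by (rule suminf_split_head[OF sm])
  moreover have "(\<Sum>n. \<gamma>^(Suc n) * L (Suc n) s') = \<gamma> * (\<Sum>s\<in>UNIV. \<Sum>a\<in>UNIV. d s * (\<pi> s a * P s a s'))"
    using sums_mult[OF S, of \<gamma>] by (simp add: sums_iff mult.assoc)
  ultimately have key: "d s' = \<rho> s' + \<gamma> * (\<Sum>s\<in>UNIV. \<Sum>a\<in>UNIV. d s * (\<pi> s a * P s a s'))"
    by (simp add: L_def)
  have pol: "(\<Sum>a\<in>UNIV. \<pi> s a) = 1" for s using assms(2) by (simp add: is_policy_def)
  have "(\<Sum>(s,a)\<in>UNIV. ((if s = s' then 1 else 0) - \<gamma> * P s a s') * occ P \<gamma> \<rho> \<pi> (s,a))
     = (\<Sum>s\<in>UNIV. \<Sum>a\<in>UNIV. (if s = s' then d s * \<pi> s a else 0) - \<gamma> * (d s * (\<pi> s a * P s a s')))"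
    apply (simp add: sum_UNIV_pair occ algebra_simps)
    apply (intro sum.cong refl)
    apply simp
    done
  also have "\<dots> = (\<Sum>s\<in>UNIV. \<Sum>a\<in>UNIV. (if s = s' then d s * \<pi> s a else 0))
       - \<gamma> * (\<Sum>s\<in>UNIV. \<Sum>a\<in>UNIV. d s * (\<pi> s a * P s a s'))"
    by (simp add: sum_subtractf sum_distrib_left)
  also have "(\<Sum>s\<in>UNIV. \<Sum>a\<in>UNIV. (if s = s' then d s * \<pi> s a else 0)) = d s'"
  proof -
    have "(\<Sum>s\<in>UNIV. \<Sum>a\<in>UNIV. (if s = s' then d s * \<pi> s a else 0))
       = (\<Sum>s\<in>UNIV. if s = s' then (\<Sum>a\<in>UNIV. d s * \<pi> s a) else 0)"
      by (intro sum.cong) auto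
    also have "\<dots> = (\<Sum>a\<in>UNIV. d s' * \<pi> s' a)" by simp
    also have "\<dots> = d s'" by (simp add: sum_distrib_left[symmetric] pol)
    finally show ?thesis .
  qed
  finally show ?thesis using key by simp
qed


lemma policy_le1: assumes "is_policy \<pi>" shows "\<pi> s a \<le> 1"
proof -
  have "\<pi> s a \<le> (\<Sum>a\<in>UNIV. \<pi> s a)"
    using assms by (intro member_le_sum) (auto simp: is_policy_def)
  thus ?thesis using assms by (simp add: is_policy_def)
qed

lemma part1:
  fixes P :: "'s::finite \<Rightarrow> 'a::finite \<Rightarrow> 's \<Rightarrow> real"
  assumes "is_kernel P" "is_policy \<pi>" "is_distribution \<rho>" "0 < \<gamma>" "\<gamma> < 1"
    and pc: "is_policy \<pi>c" and close: "\<forall>s a. \<bar>\<pi> s a - \<pi>c s a\<bar> \<le> \<epsilon>"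
  defines "d \<equiv> (\<lambda>s. \<Sum>t. \<gamma>^t * state_law P \<rho> \<pi> t s)"
  shows "occ P \<gamma> \<rho> \<pi> \<in> flow_set P \<gamma> \<rho> \<and> (\<forall>x. 0 \<le> (\<lambda>(s,a). d s * \<pi>c s a) x) \<and>
     (\<forall>s. d s = (\<Sum>a\<in>UNIV. occ P \<gamma> \<rho> \<pi> (s,a))) \<and>
     (\<forall>s a.
        \<bar>occ P \<gamma> \<rho> \<pi> (s,a) - d s * \<pi>c s a\<bar> \<le> \<epsilon> * d s \<and>
        d s * \<pi>c s a \<ge> \<rho> s * \<pi>c s a \<and>
        d s * \<pi>c s a \<ge> d s + real (card (UNIV :: 'a set)) / (1 - \<gamma>) * (\<pi>c s a - 1) \<and>
        d s * \<pi>c s a \<le> d s + \<rho> s * (\<pi>c s a - 1) \<and>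
        d s * \<pi>c s a \<le> real (card (UNIV :: 'a set)) / (1 - \<gamma>) * \<pi>c s a)"
proof -
  have occ: "occ P \<gamma> \<rho> \<pi> (s,a) = d s * \<pi> s a" for s a
    unfolding d_def by (rule occ_eq[OF assms(1-5)])
  have rho0: "0 \<le> \<rho> s" for s using assms(3) by (simp add: is_distribution_def)
  have dl: "\<rho> s \<le> d s" for s unfolding d_def by (rule d_lower[OF assms(1-5)])
  have du: "d s \<le> 1 / (1 - \<gamma>)" for s unfolding d_def by (rule d_upper[OF assms(1-5)])
  have d0: "0 \<le> d s" for s using dl[of s] rho0[of s] by simp
  define K where "K = real (card (UNIV :: 'a set)) / (1 - \<gamma>)"
  have c1: "1 \<le> real (card (UNIV :: 'a set))"
    using card_gt_0_iff[of "UNIV :: 'a set"] by simp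
  have Kd: "d s \<le> K" for s
  proof -
    have "1 / (1 - \<gamma>) \<le> K" unfolding K_def using c1 assms(5) by (intro divide_right_mono) simp_all
    thus ?thesis using du[of s] by simp
  qed
  have p0: "0 \<le> \<pi> s a" for s a using assms(2) by (simp add: is_policy_def)
  have pc0: "0 \<le> \<pi>c s a" for s a using pc by (simp add: is_policy_def)
  have pc1: "\<pi>c s a \<le> 1" for s a using policy_le1[OF pc] .
  have psum: "(\<Sum>a\<in>UNIV. \<pi> s a) = 1" for s using assms(2) by (simp add: is_policy_def)
  have A: "occ P \<gamma> \<rho> \<pi> \<in> flow_set P \<gamma> \<rho>"
  proof -
    have "\<forall>x. 0 \<le> occ P \<gamma> \<rho> \<pi> x"
    proof
      fix x show "0 \<le> occ P \<gamma> \<rho> \<pi> x" by (cases x) (simp add: occ d0 p0)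
    qed
    thus ?thesis unfolding flow_set_def using flow[OF assms(1-5)] by blast
  qed
  have B: "\<forall>s. d s = (\<Sum>a\<in>UNIV. occ P \<gamma> \<rho> \<pi> (s,a))"
    by (simp add: occ sum_distrib_left[symmetric] psum)
  have C: "\<bar>occ P \<gamma> \<rho> \<pi> (s,a) - d s * \<pi>c s a\<bar> \<le> \<epsilon> * d s" for s a
  proof -
    have "\<bar>occ P \<gamma> \<rho> \<pi> (s,a) - d s * \<pi>c s a\<bar> = d s * \<bar>\<pi> s a - \<pi>c s a\<bar>"
      using d0[of s] by (simp add: occ right_diff_distrib[symmetric] abs_mult)
    also have "\<dots> \<le> d s * \<epsilon>" using close d0[of s] by (intro mult_left_mono) auto
    finally show ?thesis by (simp add: mult.commute)
  qed
  have D: "d s * \<pi>c s a \<ge> d s + K * (\<pi>c s a - 1)" for s a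
  proof -
    have "0 \<le> (K - d s) * (1 - \<pi>c s a)" using Kd[of s] pc1[of s a] by simp
    thus ?thesis by (simp add: algebra_simps)
  qed
  have E: "d s * \<pi>c s a \<le> d s + \<rho> s * (\<pi>c s a - 1)" for s a
  proof -
    have "0 \<le> (d s - \<rho> s) * (1 - \<pi>c s a)" using dl[of s] pc1[of s a] by simp
    thus ?thesis by (simp add: algebra_simps)
  qed
  show ?thesis unfolding K_def[symmetric]
  proof (intro conjI allI)
    show "0 \<le> (\<lambda>(s,a). d s * \<pi>c s a) x" for x by (cases x) (simp add: d0 pc0)
    show "\<rho> s * \<pi>c s a \<le> d s * \<pi>c s a" for s a by (rule mult_right_mono[OF dl pc0])
    show "d s * \<pi>c s a \<le> K * \<pi>c s a" for s a by (rule mult_right_mono[OF Kd pc0])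
  qed (rule A B[rule_format] C D E)+
qed

theorem proposition4:
  fixes N nc :: nat and \<gamma> \<epsilon> :: real
    and P :: "nat \<Rightarrow> 's::finite \<Rightarrow> 'a::finite \<Rightarrow> 's \<Rightarrow> real"
    and \<rho> :: "'s \<Rightarrow> real"
    and \<Phi> :: "'s \<times> 'a \<Rightarrow> nat \<Rightarrow> real"
    and \<pi>E :: "nat \<Rightarrow> 's \<Rightarrow> 'a \<Rightarrow> real"
  assumes "0 < \<gamma>" "\<gamma> < 1" "0 \<le> \<epsilon>"
    and "is_distribution \<rho>"
    and "\<forall>i<N. is_kernel (P i)"
    and "\<forall>i<N. is_policy (\<pi>E i)"
    and "\<forall>x. \<forall>k<nc. \<bar>\<Phi> x k\<bar> \<le> 1"
  shows "(\<forall>\<pi>s \<pi>c. CAL_feasible N \<epsilon> \<pi>s \<pi>c \<longrightarrow>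
            (\<exists>lam \<nu>. R_feasible N P \<gamma> \<rho> \<epsilon> (\<lambda>i. occ (P i) \<gamma> \<rho> (\<pi>s i)) \<pi>c lam \<nu>))
       \<and> Inf {R_obj N P \<gamma> \<rho> \<Phi> nc \<pi>E \<mu> | \<mu> \<pi>c lam \<nu>. R_feasible N P \<gamma> \<rho> \<epsilon> \<mu> \<pi>c lam \<nu>}
         \<le> Inf {CAL_obj N P \<gamma> \<rho> \<Phi> nc \<pi>E \<pi>s | \<pi>s \<pi>c. CAL_feasible N \<epsilon> \<pi>s \<pi>c}"
proof -
  have P1: "\<exists>lam \<nu>. R_feasible N P \<gamma> \<rho> \<epsilon> (\<lambda>i. occ (P i) \<gamma> \<rho> (\<pi>s i)) \<pi>c lam \<nu>"
    if F: "CAL_feasible N \<epsilon> \<pi>s \<pi>c" for \<pi>s \<pi>c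
  proof -
    define d where "d i s = (\<Sum>t. \<gamma>^t * state_law (P i) \<rho> (\<pi>s i) t s)" for i s
    have H: "occ (P i) \<gamma> \<rho> (\<pi>s i) \<in> flow_set (P i) \<gamma> \<rho> \<and> (\<forall>x. 0 \<le> (\<lambda>(s,a). d i s * \<pi>c s a) x) \<and>
     (\<forall>s. d i s = (\<Sum>a\<in>UNIV. occ (P i) \<gamma> \<rho> (\<pi>s i) (s,a))) \<and>
     (\<forall>s a.
        \<bar>occ (P i) \<gamma> \<rho> (\<pi>s i) (s,a) - d i s * \<pi>c s a\<bar> \<le> \<epsilon> * d i s \<and>
        d i s * \<pi>c s a \<ge> \<rho> s * \<pi>c s a \<and>
        d i s * \<pi>c s a \<ge> d i s + real (card (UNIV :: 'a set)) / (1 - \<gamma>) * (\<pi>c s a - 1) \<and>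
        d i s * \<pi>c s a \<le> d i s + \<rho> s * (\<pi>c s a - 1) \<and>
        d i s * \<pi>c s a \<le> real (card (UNIV :: 'a set)) / (1 - \<gamma>) * \<pi>c s a)"
      if "i < N" for i
      unfolding d_def
      using F that assms by (intro part1) (auto simp: CAL_feasible_def)
    have "R_feasible N P \<gamma> \<rho> \<epsilon> (\<lambda>i. occ (P i) \<gamma> \<rho> (\<pi>s i)) \<pi>c (\<lambda>i (s,a). d i s * \<pi>c s a) d"
      unfolding R_feasible_def prod.case
    proof (intro conjI allI impI)
      show "is_policy \<pi>c" using F by (simp add: CAL_feasible_def)
    next
      fix i assume i: "i < N"
      note Hi = H[OF i]
      { show "occ (P i) \<gamma> \<rho> (\<pi>s i) \<in> flow_set (P i) \<gamma> \<rho>" using Hi by (elim conjE) }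
      { fix x have "\<forall>x. 0 \<le> (\<lambda>(s,a). d i s * \<pi>c s a) x" using Hi by blast
        then show "0 \<le> (case x of (s, a) \<Rightarrow> d i s * \<pi>c s a)" by blast }
      { fix s show "d i s = (\<Sum>a\<in>UNIV. occ (P i) \<gamma> \<rho> (\<pi>s i) (s, a))" using Hi by (elim conjE) simp }
      { fix s a
        show "\<bar>occ (P i) \<gamma> \<rho> (\<pi>s i) (s, a) - d i s * \<pi>c s a\<bar> \<le> \<epsilon> * d i s"
          using Hi by (elim conjE) simp
        show "\<rho> s * \<pi>c s a \<le> d i s * \<pi>c s a" using Hi by (elim conjE) simp
        show "d i s + real (card (UNIV :: 'a set)) / (1 - \<gamma>) * (\<pi>c s a - 1) \<le> d i s * \<pi>c s a"
          using Hi by (elim conjE) simp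
        show "d i s * \<pi>c s a \<le> d i s + \<rho> s * (\<pi>c s a - 1)" using Hi by (elim conjE) simp
        show "d i s * \<pi>c s a \<le> real (card (UNIV :: 'a set)) / (1 - \<gamma>) * \<pi>c s a"
          using Hi by (elim conjE) simp }
    qed
    thus ?thesis by blast
  qed
  define RS where "RS = {R_obj N P \<gamma> \<rho> \<Phi> nc \<pi>E \<mu> | \<mu> \<pi>c lam \<nu>. R_feasible N P \<gamma> \<rho> \<epsilon> \<mu> \<pi>c lam \<nu>}"
  define CS where "CS = {CAL_obj N P \<gamma> \<rho> \<Phi> nc \<pi>E \<pi>s | \<pi>s \<pi>c. CAL_feasible N \<epsilon> \<pi>s \<pi>c}"
  define u where "u = (\<lambda>(s::'s) (a::'a). 1 / real (card (UNIV :: 'a set)))"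
  have up: "is_policy u"
    unfolding is_policy_def u_def by simp
  have "CAL_feasible N \<epsilon> (\<lambda>i. u) u"
    using up assms(3) by (simp add: CAL_feasible_def)
  hence ne: "CS \<noteq> {}" unfolding CS_def by blast
  have bdd: "bdd_below RS"
    unfolding RS_def R_obj_def feat_dist_def
    by (rule bdd_belowI[where m=0]) (auto intro!: sum_nonneg)
  have sub: "CS \<subseteq> RS"
  proof
    fix x assume "x \<in> CS"
    then obtain \<pi>s \<pi>c where x: "x = CAL_obj N P \<gamma> \<rho> \<Phi> nc \<pi>E \<pi>s" and F: "CAL_feasible N \<epsilon> \<pi>s \<pi>c"
      unfolding CS_def by blast
    obtain lam \<nu> where "R_feasible N P \<gamma> \<rho> \<epsilon> (\<lambda>i. occ (P i) \<gamma> \<rho> (\<pi>s i)) \<pi>c lam \<nu>"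
      using P1[OF F] by blast
    moreover have "x = R_obj N P \<gamma> \<rho> \<Phi> nc \<pi>E (\<lambda>i. occ (P i) \<gamma> \<rho> (\<pi>s i))"
      unfolding x CAL_obj_def R_obj_def ..
    ultimately show "x \<in> RS" unfolding RS_def by blast
  qed
  have "Inf RS \<le> Inf CS" by (rule cInf_superset_mono[OF ne bdd sub])
  thus ?thesis using P1 unfolding RS_def CS_def by blast
qed

end
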